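(* Assume the standing setup and let $F$ be a facet of $\Delta$. Then for each $q$, $\overline H^q(\Delta)$ has a basis consisting of images of monomials in $K[\Delta]$ whose support is disjoint from $F$.
   Context: Standing setup. $k$ is a field, $d\ge 2$ is an integer, and $\Delta$ is a connected oriented simplicial $k$-homology manifold of dimension $d-1$ with vertex set $V=\{1,\dots,n\}$ (connected, links of nonempty faces $G$ have the $k$-homology of spheres of dimension $d-|G|-1$; facets carry compatible orientations giving signs $\epsilon_F\in\{\pm1\}$, all $1$ in characteristic $2$). Let $K=k(a_{i,j}:1\le i\le d,\ 1\le j\le n)$ with independent indeterminates, $K[\Delta]$ the Stanley–Reisner ring over $K$ in variables $x_1,\dots,x_n$, $\theta_i=\sum_ja_{i,j}x_j$, $H(\Delta)=K[\Delta]/(\theta_1,\dots,\theta_d)$, $\deg:H^d(\Delta)\to K$ the isomorphism with $\deg(x_G)=\epsilon_G/[G]$ for facets $G$ ($x_G=\prod_{j\in G}x_j$, $[G]$ the determinant of the $d\times d$ matrix $(a_{i,j_m})$ for $G=\{j_1<\dots<j_d\}$), and $\overline H(\Delta)$ the Gorenstein quotient of $H(\Delta)$ by the ideal of $y$ with $\deg(yz)=0$ for all $z$, with graded pieces $\overline H^q(\Delta)$. The support of a nonzero monomial $x_{j_1}^{b_1}\cdots x_{j_s}^{b_s}$ with all $b_m>0$ is the set $\{j_1,\dots,j_s\}$. *)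

theory Defs
  imports "HOL-Library.Poly_Mapping" "HOL-Library.Product_Lexorder" "HOL-Library.Function_Algebras"
    "HOL-Computational_Algebra.Fraction_Field" "Jordan_Normal_Form.Determinant"
begin

text \<open>k[a_ij]: polynomials over k in the indeterminates a_(i,j) (exponent vectors indexed by pairs);
  K is its fraction field, i.e. the rational function field k(a_ij).\<close>
type_synonym 'k coeffpoly = "((nat \<times> nat) \<Rightarrow>\<^sub>0 nat) \<Rightarrow>\<^sub>0 'k"
type_synonym 'k KK = "'k coeffpoly fract"

type_synonym 'K pol = "(nat \<Rightarrow>\<^sub>0 nat) \<Rightarrow>\<^sub>0 'K"

definition indet :: "nat \<Rightarrow> nat \<Rightarrow> 'k::field KK" where
  "indet i j = Fract (Poly_Mapping.single (Poly_Mapping.single (i, j) 1) 1) 1"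

definition const_pol :: "'K::comm_ring_1 \<Rightarrow> 'K pol" where
  "const_pol c = Poly_Mapping.single 0 c"

definition var :: "nat \<Rightarrow> 'K::comm_ring_1 pol" where
  "var j = Poly_Mapping.single (Poly_Mapping.single j 1) 1"

definition monom :: "(nat \<Rightarrow>\<^sub>0 nat) \<Rightarrow> 'K::comm_ring_1 pol" where
  "monom m = Poly_Mapping.single m 1"

definition mdeg :: "(nat \<Rightarrow>\<^sub>0 nat) \<Rightarrow> nat" where
  "mdeg m = (\<Sum>v\<in>Poly_Mapping.keys m. Poly_Mapping.lookup m v)"

definition supp :: "(nat \<Rightarrow>\<^sub>0 nat) \<Rightarrow> nat set" where
  "supp m = Poly_Mapping.keys m"

definition homog :: "nat \<Rightarrow> 'K::comm_ring_1 pol \<Rightarrow> bool" where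
  "homog q p \<longleftrightarrow> (\<forall>m\<in>Poly_Mapping.keys p. mdeg m = q)"

definition hcomp :: "nat \<Rightarrow> 'K::comm_ring_1 pol \<Rightarrow> 'K pol" where
  "hcomp q p = (\<Sum>m\<in>{m\<in>Poly_Mapping.keys p. mdeg m = q}. Poly_Mapping.single m (Poly_Mapping.lookup p m))"

definition xG :: "nat set \<Rightarrow> 'K::comm_ring_1 pol" where
  "xG G = (\<Prod>j\<in>G. var j)"

definition simplicial_complex :: "nat \<Rightarrow> nat set set \<Rightarrow> bool" where
  "simplicial_complex n \<Delta> \<longleftrightarrow> {} \<in> \<Delta> \<and> (\<forall>F\<in>\<Delta>. F \<subseteq> {1..n})
     \<and> (\<forall>F\<in>\<Delta>. \<forall>G. G \<subseteq> F \<longrightarrow> G \<in> \<Delta>) \<and> (\<forall>j\<in>{1..n}. {j} \<in> \<Delta>)"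

definition facet :: "nat set set \<Rightarrow> nat set \<Rightarrow> bool" where
  "facet \<Delta> F \<longleftrightarrow> F \<in> \<Delta> \<and> (\<forall>G\<in>\<Delta>. F \<subseteq> G \<longrightarrow> G = F)"

definition link :: "nat set set \<Rightarrow> nat set \<Rightarrow> nat set set" where
  "link \<Delta> G = {H\<in>\<Delta>. H \<inter> G = {} \<and> H \<union> G \<in> \<Delta>}"

definition connected_complex :: "nat \<Rightarrow> nat set set \<Rightarrow> bool" where
  "connected_complex n \<Delta> \<longleftrightarrow> n \<ge> 1 \<and>
     (\<forall>i\<in>{1..n}. \<forall>j\<in>{1..n}. (i, j) \<in> {(u, v). {u, v} \<in> \<Delta>}\<^sup>*)"

text \<open>Reduced simplicial chains with coefficients in k, indexed by face size s
  (size s = dimension s-1; size 0 is the empty face, giving reduced homology).\<close>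
definition chains :: "'k::field itself \<Rightarrow> nat set set \<Rightarrow> nat \<Rightarrow> (nat set \<Rightarrow> 'k) set" where
  "chains _ L s = {c. \<forall>H. c H \<noteq> 0 \<longrightarrow> H \<in> L \<and> card H = s}"

text \<open>boundary: the face H \<union> {v} = {j_0 < ... < j_s} maps to sum of (-1)^m [without j_m]\<close>
definition bd :: "nat set set \<Rightarrow> (nat set \<Rightarrow> 'k::field) \<Rightarrow> (nat set \<Rightarrow> 'k)" where
  "bd L c = (\<lambda>H. if H \<in> L then
      (\<Sum>v\<in>{v. v \<notin> H \<and> insert v H \<in> L}. of_int ((-1) ^ card {u\<in>H. u < v}) * c (insert v H))
     else 0)"

definition fscale :: "'k::field \<Rightarrow> (nat set \<Rightarrow> 'k) \<Rightarrow> (nat set \<Rightarrow> 'k)" where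
  "fscale a f = (\<lambda>x. a * f x)"

text \<open>dimension over k of the reduced homology of L in dimension s-1\<close>
definition hdim :: "'k::field itself \<Rightarrow> nat set set \<Rightarrow> nat \<Rightarrow> nat" where
  "hdim T L s =
     vector_space.dim (fscale :: 'k \<Rightarrow> _) {c\<in>chains T L s. bd L c = (\<lambda>_. 0)}
     - vector_space.dim (fscale :: 'k \<Rightarrow> _) (bd L ` chains T L (Suc s))"

text \<open>connected k-homology manifold of dimension d-1: links of nonempty faces G have the
  k-homology of a (d - |G| - 1)-sphere (size index d - |G|)\<close>
definition homology_manifold :: "'k::field itself \<Rightarrow> nat \<Rightarrow> nat \<Rightarrow> nat set set \<Rightarrow> bool" where
  "homology_manifold T d n \<Delta> \<longleftrightarrow> simplicial_complex n \<Delta> \<and> connected_complex n \<Delta>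
     \<and> (\<forall>G\<in>\<Delta>. card G \<le> d) \<and> (\<exists>G\<in>\<Delta>. card G = d)
     \<and> (\<forall>G\<in>\<Delta>. G \<noteq> {} \<longrightarrow> (\<forall>s. hdim T (link \<Delta> G) s = (if s = d - card G then 1 else 0)))"

text \<open>compatible orientation signs on facets (a k-fundamental cycle); all 1 in characteristic 2\<close>
definition oriented :: "'k::field itself \<Rightarrow> nat \<Rightarrow> nat set set \<Rightarrow> (nat set \<Rightarrow> int) \<Rightarrow> bool" where
  "oriented T d \<Delta> eps \<longleftrightarrow>
     (\<forall>G. facet \<Delta> G \<longrightarrow> eps G \<in> {1, -1}) \<and>
     (CHAR('k) = 2 \<longrightarrow> (\<forall>G. facet \<Delta> G \<longrightarrow> eps G = 1)) \<and>
     (\<forall>R\<in>\<Delta>. card R + 1 = d \<longrightarrow>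
        (of_int (\<Sum>v\<in>{v. v \<notin> R \<and> insert v R \<in> \<Delta>}.
            eps (insert v R) * (-1) ^ card {u\<in>R. u < v}) :: 'k) = 0)"

definition theta :: "nat \<Rightarrow> nat \<Rightarrow> ('k::field KK) pol" where
  "theta n i = (\<Sum>j=1..n. const_pol (indet i j) * var j)"

definition bracket :: "nat \<Rightarrow> nat set \<Rightarrow> 'k::field KK" where
  "bracket d G = det (mat d d (\<lambda>(i, m). indet (i + 1) (sorted_list_of_set G ! m)))"

text \<open>membership in I_Delta + (theta_1, ..., theta_d), where I_Delta is spanned by monomials
  whose support is not a face\<close>
definition in_I :: "'k::field itself \<Rightarrow> nat \<Rightarrow> nat \<Rightarrow> nat set set \<Rightarrow> ('k KK) pol \<Rightarrow> bool" where
  "in_I _ n d \<Delta> p \<longleftrightarrow> (\<exists>g :: nat \<Rightarrow> ('k KK) pol.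
      \<forall>m\<in>Poly_Mapping.keys (p - (\<Sum>i=1..d. theta n i * g i)). supp m \<notin> \<Delta>)"

text \<open>the ideal defining the Gorenstein quotient (pulled back to the polynomial ring):
  y with deg(yz) = 0 for all z, deg applied to the degree-d component\<close>
definition gor :: "nat \<Rightarrow> (('k::field KK) pol \<Rightarrow> 'k KK) \<Rightarrow> ('k KK) pol \<Rightarrow> bool" where
  "gor d deg y \<longleftrightarrow> (\<forall>z. deg (hcomp d (y * z)) = 0)"

end

theory Submission imports Defs begin


lemma decomp: "(p::'a \<Rightarrow>\<^sub>0 'b::comm_monoid_add) = (\<Sum>m\<in>Poly_Mapping.keys p. Poly_Mapping.single m (Poly_Mapping.lookup p m))"
proof (rule poly_mapping_eqI)
  fix k
  show "Poly_Mapping.lookup p k = Poly_Mapping.lookup (\<Sum>m\<in>Poly_Mapping.keys p. Poly_Mapping.single m (Poly_Mapping.lookup p m)) k"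
    by (simp add: lookup_sum lookup_single when_def in_keys_iff)
qed

lemma lookup_hcomp: "Poly_Mapping.lookup (hcomp q p) m = (if mdeg m = q then Poly_Mapping.lookup p m else 0)"
  unfolding hcomp_def by (simp add: lookup_sum lookup_single when_def in_keys_iff)

lemma hcomp_add: "hcomp q (p + p') = hcomp q p + hcomp q p'"
  by (rule poly_mapping_eqI) (simp add: lookup_hcomp lookup_add)

lemma hcomp_diff: "hcomp q (p - p') = hcomp q p - hcomp q p'"
  by (rule poly_mapping_eqI) (simp add: lookup_hcomp lookup_minus)

lemma hcomp_0[simp]: "hcomp q 0 = 0"
  by (rule poly_mapping_eqI) (simp add: lookup_hcomp)

lemma hcomp_sum: "hcomp q (\<Sum>i\<in>I. f i) = (\<Sum>i\<in>I. hcomp q (f i))"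
  by (induction I rule: infinite_finite_induct) (auto simp: hcomp_add)

lemma hcomp_single: "hcomp q (Poly_Mapping.single m c) = (if mdeg m = q then Poly_Mapping.single m c else 0)"
  by (rule poly_mapping_eqI) (simp add: lookup_hcomp lookup_single when_def)

lemma homog_hcomp: "homog q (hcomp q p)"
  unfolding homog_def by (auto simp: in_keys_iff lookup_hcomp split: if_splits)

lemma mdeg_alt: "mdeg m = (\<Sum>v\<in>A. Poly_Mapping.lookup m v)" if "finite A" "Poly_Mapping.keys m \<subseteq> A"
  unfolding mdeg_def using that
  by (intro sum.mono_neutral_left) (auto simp: in_keys_iff)

lemma mdeg_add: "mdeg (a + b) = mdeg a + mdeg b"
proof -
  let ?A = "Poly_Mapping.keys a \<union> Poly_Mapping.keys b"
  have "mdeg (a+b) = (\<Sum>v\<in>?A. Poly_Mapping.lookup (a+b) v)"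
    by (rule mdeg_alt) (auto simp: keys_add)
  also have "\<dots> = (\<Sum>v\<in>?A. Poly_Mapping.lookup a v) + (\<Sum>v\<in>?A. Poly_Mapping.lookup b v)"
    by (simp add: lookup_add sum.distrib)
  also have "\<dots> = mdeg a + mdeg b"
    using mdeg_alt[of ?A a] mdeg_alt[of ?A b] by simp
  finally show ?thesis .
qed

lemma mdeg_single: "mdeg (Poly_Mapping.single j (1::nat)) = 1"
  by (simp add: mdeg_def)

lemma mdeg_0[simp]: "mdeg 0 = 0" by (simp add: mdeg_def)

lemma hcomp_mult_single:
  assumes "mdeg a \<le> q"
  shows "hcomp q (Poly_Mapping.single a c * g) = Poly_Mapping.single a c * hcomp (q - mdeg a) (g::'K::comm_ring_1 pol)"
proof -
  have "hcomp q (Poly_Mapping.single a c * g) = (\<Sum>m\<in>Poly_Mapping.keys g. hcomp q (Poly_Mapping.single a c * Poly_Mapping.single m (Poly_Mapping.lookup g m)))"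
    by (subst decomp[of g]) (simp add: sum_distrib_left hcomp_sum)
  also have "\<dots> = (\<Sum>m\<in>Poly_Mapping.keys g. Poly_Mapping.single a c * hcomp (q - mdeg a) (Poly_Mapping.single m (Poly_Mapping.lookup g m)))"
    using assms by (intro sum.cong refl) (auto simp: mult_single hcomp_single mdeg_add)
  also have "\<dots> = Poly_Mapping.single a c * hcomp (q - mdeg a) g"
    by (subst (2) decomp[of g]) (simp add: sum_distrib_left hcomp_sum)
  finally show ?thesis .
qed

lemma const_var: "const_pol c * var j = Poly_Mapping.single (Poly_Mapping.single j 1) c"
  by (simp add: const_pol_def var_def mult_single)

lemma hcomp_const: "hcomp q (const_pol c * p) = const_pol c * hcomp q p"
  unfolding const_pol_def using hcomp_mult_single[of 0 q c p] by simp

lemma hcomp_theta: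
  assumes "q \<ge> 1"
  shows "hcomp q (theta n i * g) = theta n i * hcomp (q - 1) g"
  unfolding theta_def sum_distrib_right hcomp_sum const_var
  by (intro sum.cong refl) (use assms hcomp_mult_single[of "Poly_Mapping.single _ 1" q] mdeg_single in auto)




definition dclosed :: "nat set set \<Rightarrow> bool" where
  "dclosed \<Delta> \<longleftrightarrow> (\<forall>F\<in>\<Delta>. \<forall>G. G \<subseteq> F \<longrightarrow> G \<in> \<Delta>)"

lemma supp_add_nat: "supp (a + b) = supp a \<union> supp (b :: nat \<Rightarrow>\<^sub>0 nat)"
  unfolding supp_def by (auto simp: in_keys_iff lookup_add)

lemma in_keys_addD: "m \<in> Poly_Mapping.keys (a + b) \<Longrightarrow> m \<in> Poly_Mapping.keys a \<or> m \<in> Poly_Mapping.keys (b::'a \<Rightarrow>\<^sub>0 'b::comm_monoid_add)"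
  by (auto simp: in_keys_iff lookup_add)

lemma in_I_0: "in_I T n d \<Delta> 0"
  unfolding in_I_def by (rule exI[of _ "\<lambda>_. 0"]) simp

lemma in_I_add: "in_I T n d \<Delta> p \<Longrightarrow> in_I T n d \<Delta> p' \<Longrightarrow> in_I T n d \<Delta> (p + p')"
  unfolding in_I_def
proof (elim exE)
  fix g g' assume 1: "\<forall>m\<in>Poly_Mapping.keys (p - (\<Sum>i = 1..d. theta n i * g i)). supp m \<notin> \<Delta>"
    and 2: "\<forall>m\<in>Poly_Mapping.keys (p' - (\<Sum>i = 1..d. theta n i * g' i)). supp m \<notin> \<Delta>"
  have eq: "p + p' - (\<Sum>i = 1..d. theta n i * (g i + g' i)) =
     (p - (\<Sum>i = 1..d. theta n i * g i)) + (p' - (\<Sum>i = 1..d. theta n i * g' i))"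
    by (simp add: distrib_left sum.distrib)
  show "\<exists>g. \<forall>m\<in>Poly_Mapping.keys (p + p' - (\<Sum>i = 1..d. theta n i * g i)). supp m \<notin> \<Delta>"
  proof (intro exI[of _ "\<lambda>i. g i + g' i"] ballI)
    fix m assume mm: "m \<in> Poly_Mapping.keys (p + p' - (\<Sum>i = 1..d. theta n i * (g i + g' i)))"
    have "m \<in> Poly_Mapping.keys ((p - (\<Sum>i = 1..d. theta n i * g i)) + (p' - (\<Sum>i = 1..d. theta n i * g' i)))"
      using mm by (simp only: eq)
    then have "m \<in> Poly_Mapping.keys (p - (\<Sum>i = 1..d. theta n i * g i)) \<or> m \<in> Poly_Mapping.keys (p' - (\<Sum>i = 1..d. theta n i * g' i))"
      by (rule in_keys_addD)
    then show "supp m \<notin> \<Delta>" using 1 2 by (elim disjE) simp_all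
  qed
qed

lemma in_I_intro:
  assumes e: "q - (\<Sum>i = 1..d. theta n i * g i) = r" and h: "\<forall>m\<in>Poly_Mapping.keys r. supp m \<notin> \<Delta>"
  shows "in_I T n d \<Delta> q"
  unfolding in_I_def
  by (rule exI[of _ g], subst e, rule h)

lemma in_I_uminus: "in_I T n d \<Delta> p \<Longrightarrow> in_I T n d \<Delta> (- p)"
proof -
  assume "in_I T n d \<Delta> p"
  then obtain g where 1: "\<forall>m\<in>Poly_Mapping.keys (p - (\<Sum>i = 1..d. theta n i * g i)). supp m \<notin> \<Delta>"
    unfolding in_I_def by blast
  have "- p - (\<Sum>i = 1..d. theta n i * (- g i)) = - (p - (\<Sum>i = 1..d. theta n i * g i))"
    by (simp add: sum_negf)
  moreover have "\<forall>m\<in>Poly_Mapping.keys (- (p - (\<Sum>i = 1..d. theta n i * g i))). supp m \<notin> \<Delta>"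
    using 1 by (simp only: keys_minus)
  ultimately show "in_I T n d \<Delta> (- p)" by (rule in_I_intro)
qed

lemma in_I_diff: "in_I T n d \<Delta> p \<Longrightarrow> in_I T n d \<Delta> p' \<Longrightarrow> in_I T n d \<Delta> (p - p')"
  unfolding diff_conv_add_uminus by (intro in_I_add in_I_uminus)

lemma in_I_sum: "(\<And>i. i \<in> A \<Longrightarrow> in_I T n d \<Delta> (f i)) \<Longrightarrow> in_I T n d \<Delta> (\<Sum>i\<in>A. f i)"
  by (induction A rule: infinite_finite_induct) (simp_all add: in_I_add in_I_0)

lemma nonface_mult:
  assumes "dclosed \<Delta>" "\<forall>m\<in>Poly_Mapping.keys r. supp m \<notin> \<Delta>"
  shows "\<forall>m\<in>Poly_Mapping.keys (r * z). supp m \<notin> \<Delta>"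
proof
  fix m assume "m \<in> Poly_Mapping.keys (r * z)"
  then obtain a b where ab: "m = a + b" "a \<in> Poly_Mapping.keys r" using keys_mult by blast
  then have "supp a \<subseteq> supp m" by (simp add: supp_add_nat)
  moreover have "supp a \<notin> \<Delta>" using assms(2) ab(2) by blast
  ultimately show "supp m \<notin> \<Delta>" using assms(1) unfolding dclosed_def by blast
qed

lemma in_I_mult: "dclosed \<Delta> \<Longrightarrow> in_I T n d \<Delta> p \<Longrightarrow> in_I T n d \<Delta> (p * z)"
  unfolding in_I_def[of T n d \<Delta> p]
proof (elim exE)
  fix g assume D: "dclosed \<Delta>" and 1: "\<forall>m\<in>Poly_Mapping.keys (p - (\<Sum>i = 1..d. theta n i * g i)). supp m \<notin> \<Delta>"
  have "p * z - (\<Sum>i = 1..d. theta n i * (g i * z)) = (p - (\<Sum>i = 1..d. theta n i * g i)) * z"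
    by (simp add: left_diff_distrib sum_distrib_right mult.assoc)
  then show "in_I T n d \<Delta> (p * z)"
    using nonface_mult[OF D 1, of z] by (rule in_I_intro)
qed

lemma in_I_theta: "i \<in> {1..d} \<Longrightarrow> in_I T n d \<Delta> (theta n i * z)"
proof -
  assume "i \<in> {1..d}"
  then have "(\<Sum>i' = 1..d. theta n i' * (if i' = i then z else 0)) = theta n i * z"
    by (simp add: if_distrib cong: if_cong)
  then have "theta n i * z - (\<Sum>i' = 1..d. theta n i' * (if i' = i then z else 0)) = 0" by simp
  then show ?thesis by (rule in_I_intro) simp
qed

lemma in_I_nonface: "supp m \<notin> \<Delta> \<Longrightarrow> in_I T n d \<Delta> (Poly_Mapping.single m c)"
  by (rule in_I_intro[where g="\<lambda>_. 0" and r="Poly_Mapping.single m c"]) auto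

lemma keys_hcomp: "Poly_Mapping.keys (hcomp d r) \<subseteq> Poly_Mapping.keys r"
  by (auto simp: in_keys_iff lookup_hcomp split: if_splits)

lemma in_I_hcomp:
  assumes "d \<ge> 1" "in_I T n d \<Delta> p"
  shows "in_I T n d \<Delta> (hcomp d p)"
proof -
  from assms obtain g where 1: "\<forall>m\<in>Poly_Mapping.keys (p - (\<Sum>i = 1..d. theta n i * g i)). supp m \<notin> \<Delta>"
    unfolding in_I_def by blast
  have "hcomp d p - (\<Sum>i = 1..d. theta n i * hcomp (d - 1) (g i)) = hcomp d (p - (\<Sum>i = 1..d. theta n i * g i))"
    using assms(1) by (simp add: hcomp_diff hcomp_sum hcomp_theta)
  moreover have "\<forall>m\<in>Poly_Mapping.keys (hcomp d (p - (\<Sum>i = 1..d. theta n i * g i))). supp m \<notin> \<Delta>"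
    using 1 keys_hcomp by blast
  ultimately show ?thesis by (rule in_I_intro)
qed




definition Xv :: "nat \<Rightarrow> nat \<Rightarrow> 'k::field coeffpoly" where
  "Xv i j = Poly_Mapping.single (Poly_Mapping.single (i, j) 1) 1"

lemma indet_Xv: "indet i j = to_fract (Xv i j)"
  by (simp add: indet_def Xv_def to_fract_def)

lemma prod_single: "(\<Prod>i\<in>I. Poly_Mapping.single (e i) (1::'b::comm_semiring_1))
   = Poly_Mapping.single (\<Sum>i\<in>I. e i) 1"
  by (induction I rule: infinite_finite_induct) (auto simp: mult_single)

lemma generic_det_nonzero:
  assumes "distinct gs" "length gs = r"
  shows "det (mat r r (\<lambda>(i, m). indet (i + 1) (gs ! m))) \<noteq> (0 :: 'k::field KK)"
proof -
  let ?M = "mat r r (\<lambda>(i, m). Xv (i + 1) (gs ! m)) :: 'k coeffpoly mat"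
  interpret inj_comm_ring_hom "to_fract :: 'k coeffpoly \<Rightarrow> _" by (unfold_locales, auto)
  have eq: "mat r r (\<lambda>(i, m). indet (i + 1) (gs ! m)) = map_mat to_fract ?M"
    by (auto simp: indet_Xv)
  define E where "E p = (\<Sum>i = 0..<r. Poly_Mapping.single (i + 1, gs ! p i) (1::nat))" for p :: "nat \<Rightarrow> nat"
  have detM: "det ?M = (\<Sum>p\<in>{p. p permutes {0..<r}}. Poly_Mapping.single (E p) (of_int (sign p)))"
  proof -
    have "det ?M = (\<Sum>p\<in>{p. p permutes {0..<r}}. of_int (sign p) * (\<Prod>i = 0..<r. ?M $$ (i, p i)))"
      by (rule det_def') simp
    also have "\<dots> = (\<Sum>p\<in>{p. p permutes {0..<r}}. Poly_Mapping.single (E p) (of_int (sign p)))"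
    proof (intro sum.cong refl)
      fix p assume p: "p \<in> {p. p permutes {0..<r}}"
      have "(\<Prod>i = 0..<r. ?M $$ (i, p i)) = (\<Prod>i = 0..<r. Poly_Mapping.single (Poly_Mapping.single (i + 1, gs ! p i) 1) 1)"
        using p by (intro prod.cong refl) (auto simp: Xv_def permutes_in_image)
      also have "\<dots> = Poly_Mapping.single (E p) 1" by (simp add: prod_single E_def)
      finally show "of_int (sign p) * (\<Prod>i = 0..<r. ?M $$ (i, p i)) = Poly_Mapping.single (E p) (of_int (sign p))"
        by (simp flip: single_of_int add: mult_single)
    qed
    finally show ?thesis .
  qed
  have lookE: "Poly_Mapping.lookup (E p) (i + 1, gs ! j) = (if p i = j then 1 else 0)"
    if p: "p permutes {0..<r}" and i: "i < r" and j: "j < r" for p i j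
  proof -
    have "Poly_Mapping.lookup (E p) (i + 1, gs ! j) = (\<Sum>i' = 0..<r. if i' = i \<and> p i = j then 1 else 0)"
      unfolding E_def lookup_sum
    proof (intro sum.cong refl)
      fix i' assume i': "i' \<in> {0..<r}"
      have "p i' < r" using permutes_in_image[OF p, of i'] i' by simp
      then have "(gs ! p i' = gs ! j) = (p i' = j)" using assms j nth_eq_iff_index_eq by metis
      then show "Poly_Mapping.lookup (Poly_Mapping.single (i' + 1, gs ! p i') 1) (i + 1, gs ! j) = (if i' = i \<and> p i = j then 1 else 0)"
        by (auto simp: lookup_single when_def)
    qed
    also have "\<dots> = (if p i = j then 1 else 0)" using i by (simp add: sum.delta' if_distrib cong: if_cong)
    finally show ?thesis .
  qed
  have Eid: "p = id" if p: "p permutes {0..<r}" and E: "E p = E id" for p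
  proof
    fix i show "p i = id i"
    proof (cases "i < r")
      case True
      then have pi: "p i < r" using permutes_in_image[OF p, of i] by simp
      have "Poly_Mapping.lookup (E p) (i + 1, gs ! p i) = Poly_Mapping.lookup (E id) (i + 1, gs ! p i)"
        using E by (rule arg_cong)
      then have "(1::nat) = (if id i = p i then 1 else 0)"
        using lookE[OF p True pi] lookE[OF permutes_id True pi] by simp
      then show ?thesis by (cases "id i = p i") simp_all
    next
      case False then show ?thesis using permutes_not_in[OF p, of i] by simp
    qed
  qed
  have "Poly_Mapping.lookup (det ?M) (E id) = (\<Sum>p\<in>{p. p permutes {0..<r}}. if p = id then 1 else 0)"
    unfolding detM lookup_sum
    by (intro sum.cong refl) (auto simp: lookup_single when_def dest: Eid)
  also have "\<dots> = 1" by (simp add: sum.delta finite_permutations permutes_id)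
  finally have "det ?M \<noteq> 0" by auto
  then show ?thesis unfolding eq hom_det by simp
qed




lemma const_pol_add: "const_pol (a + b) = const_pol a + (const_pol b :: 'K::comm_ring_1 pol)"
  by (simp add: const_pol_def single_add)
lemma const_pol_mult: "const_pol (a * b) = const_pol a * (const_pol b :: 'K::comm_ring_1 pol)"
  by (simp add: const_pol_def mult_single)
lemma const_pol_0[simp]: "const_pol 0 = 0" by (simp add: const_pol_def)
lemma const_pol_1[simp]: "const_pol 1 = 1" by (simp add: const_pol_def)
lemma const_pol_uminus: "const_pol (- a) = - (const_pol a :: 'K::comm_ring_1 pol)"
  by (simp add: const_pol_def single_uminus)
lemma const_pol_sum: "const_pol (\<Sum>i\<in>I. f i) = (\<Sum>i\<in>I. const_pol (f i) :: 'K::comm_ring_1 pol)"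
  by (induction I rule: infinite_finite_induct) (simp_all add: const_pol_add)

lemma left_inverse_exists:
  assumes "A \<in> carrier_mat r r" "det A \<noteq> (0 :: 'a :: field)"
  shows "\<exists>B. B \<in> carrier_mat r r \<and> B * A = 1\<^sub>m r"
proof -
  have "A \<in> Units (ring_mat TYPE('a) r ())" by (rule det_non_zero_imp_unit[OF assms])
  then show ?thesis unfolding Units_def ring_mat_def by auto
qed

lemma elim_var:
  fixes F :: "nat set"
  assumes F: "finite F" "F \<subseteq> {1..n}" "card F \<le> d" and j: "j \<in> F"
  shows "\<exists>b. in_I (TYPE('k::field)) n d \<Delta>
     (var j - (\<Sum>l\<in>{1..n} - F. const_pol (b l) * var l))"
proof -
  define gs where "gs = sorted_list_of_set F"
  define r where "r = card F"
  have gs: "distinct gs" "length gs = r" "set gs = F" unfolding gs_def r_def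
    using F(1) by (simp_all only: distinct_sorted_list_of_set length_sorted_list_of_set set_sorted_list_of_set)
  define A :: "'k KK mat" where "A = mat r r (\<lambda>(i, m). indet (i + 1) (gs ! m))"
  have Ac: "A \<in> carrier_mat r r" by (simp add: A_def)
  have "det A \<noteq> 0" unfolding A_def by (rule generic_det_nonzero[OF gs(1,2)])
  then obtain B where Bc: "B \<in> carrier_mat r r" and BA: "B * A = 1\<^sub>m r"
    using left_inverse_exists[OF Ac] by blast
  obtain m0 where m0: "m0 < r" "gs ! m0 = j" using j gs(2,3) in_set_conv_nth[of j gs] by auto
  have BAe: "(\<Sum>i<r. B $$ (m0, i) * indet (i + 1) (gs ! m')) = (if m0 = m' then 1 else 0)"
    if mr: "m' < r" for m'
  proof -
    have "(B * A) $$ (m0, m') = (if m0 = m' then 1 else 0)" using BA m0 mr by simp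
    moreover have "(B * A) $$ (m0, m') = (\<Sum>i<r. B $$ (m0, i) * indet (i + 1) (gs ! m'))"
      using Bc Ac m0 mr by (simp add: scalar_prod_def A_def lessThan_atLeast0)
    ultimately show ?thesis by simp
  qed
  define C where "C i = (if i \<ge> 1 \<and> i \<le> r then B $$ (m0, i - 1) else 0)" for i
  define coef where "coef l = (\<Sum>i = 1..d. C i * indet i l)" for l
  have coefF: "coef l = (if l = j then 1 else 0)" if lF: "l \<in> F" for l
  proof -
    obtain m' where m': "m' < r" "gs ! m' = l" using lF gs(2,3) in_set_conv_nth[of l gs] by auto
    have "coef l = (\<Sum>i = 1..r. C i * indet i l)"
      unfolding coef_def using F(3) by (intro sum.mono_neutral_right) (auto simp: C_def r_def)
    also have "\<dots> = (\<Sum>i<r. C (i + 1) * indet (i + 1) l)"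
    proof -
      have "(\<Sum>i = 1..r. C i * indet i l) = (\<Sum>i\<in>Suc ` {..<r}. C i * indet i l)"
        by (simp add: image_Suc_lessThan)
      also have "\<dots> = (\<Sum>i<r. C (i + 1) * indet (i + 1) l)" by (simp add: sum.reindex)
      finally show ?thesis .
    qed
    also have "\<dots> = (\<Sum>i<r. B $$ (m0, i) * indet (i + 1) (gs ! m'))"
      using m' by (intro sum.cong refl) (auto simp: C_def)
    also have "\<dots> = (if m0 = m' then 1 else 0)" by (rule BAe[OF m'(1)])
    also have "\<dots> = (if l = j then 1 else 0)"
      using nth_eq_iff_index_eq[OF gs(1), of m0 m'] m0 m' gs(2) by auto
    finally show ?thesis .
  qed
  define g where "g i = const_pol (C i)" for i
  have "(\<Sum>i = 1..d. theta n i * g i) = (\<Sum>i = 1..d. \<Sum>l = 1..n. const_pol (C i * indet i l) * var l)"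
    unfolding theta_def g_def
    by (simp add: sum_distrib_right sum_distrib_left const_pol_mult mult_ac)
  also have "\<dots> = (\<Sum>l = 1..n. const_pol (coef l) * var l)"
    unfolding coef_def by (subst sum.swap) (simp add: const_pol_sum sum_distrib_right)
  also have "\<dots> = (\<Sum>l\<in>F. const_pol (coef l) * var l) + (\<Sum>l\<in>{1..n} - F. const_pol (coef l) * var l)"
    using sum.subset_diff[OF F(2), of "\<lambda>l. const_pol (coef l) * var l"] by (simp add: add.commute)
  also have "(\<Sum>l\<in>F. const_pol (coef l) * var l) = (var j :: 'k KK pol)"
  proof -
    have "(\<Sum>l\<in>F. const_pol (coef l) * var l) = (\<Sum>l\<in>F. if l = j then var j else (0 :: 'k KK pol))"
      by (intro sum.cong refl) (simp add: coefF)
    also have "\<dots> = var j" using F(1) j by simp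
    finally show ?thesis .
  qed
  finally have eq: "(\<Sum>i = 1..d. theta n i * g i) = var j + (\<Sum>l\<in>{1..n} - F. const_pol (coef l) * var l)" .
  have "var j - (\<Sum>l\<in>{1..n} - F. const_pol (- coef l) * var l) - (\<Sum>i = 1..d. theta n i * g i) = 0"
    unfolding eq by (simp add: const_pol_uminus sum_negf)
  then have "in_I TYPE('k) n d \<Delta> (var j - (\<Sum>l\<in>{1..n} - F. const_pol (- coef l) * var l))"
    by (rule in_I_intro) simp
  then show ?thesis by (rule exI[of _ "\<lambda>l. - coef l"])
qed




definition Smon :: "nat set set \<Rightarrow> nat set \<Rightarrow> nat \<Rightarrow> (nat \<Rightarrow>\<^sub>0 nat) set" where
  "Smon \<Delta> F q = {m. supp m \<in> \<Delta> \<and> supp m \<inter> F = {} \<and> mdeg m = q}"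

definition spn :: "'k::field itself \<Rightarrow> nat \<Rightarrow> nat \<Rightarrow> nat set set \<Rightarrow> (nat \<Rightarrow>\<^sub>0 nat) set \<Rightarrow> 'k KK pol \<Rightarrow> bool" where
  "spn T n d \<Delta> S y \<longleftrightarrow> (\<exists>c. in_I T n d \<Delta> (y - (\<Sum>s\<in>S. const_pol (c s) * monom s)))"

lemma lookup_le_mdeg: "Poly_Mapping.lookup m i \<le> mdeg m"
proof (cases "i \<in> Poly_Mapping.keys m")
  case True then show ?thesis unfolding mdeg_def by (intro member_le_sum) auto
next
  case False then show ?thesis by (simp add: in_keys_iff)
qed

lemma finite_Smon:
  assumes "\<forall>G\<in>\<Delta>. G \<subseteq> {1..n}"
  shows "finite (Smon \<Delta> F q)"
proof -
  let ?S = "{f. \<forall>x. (x \<in> {1..n} \<longrightarrow> f x \<in> {0..q}) \<and> (x \<notin> {1..n} \<longrightarrow> f x = (0::nat))}"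
  have fin: "finite ?S" by (rule finite_set_of_finite_funs) auto
  have "Poly_Mapping.lookup ` Smon \<Delta> F q \<subseteq> ?S"
  proof
    fix f assume "f \<in> Poly_Mapping.lookup ` Smon \<Delta> F q"
    then obtain m where m: "m \<in> Smon \<Delta> F q" "f = Poly_Mapping.lookup m" by blast
    then have "supp m \<subseteq> {1..n}" using assms unfolding Smon_def by blast
    moreover have "Poly_Mapping.lookup m x \<le> q" for x using m lookup_le_mdeg[of m x] unfolding Smon_def by simp
    ultimately show "f \<in> ?S" using m(2) unfolding supp_def by (auto simp: in_keys_iff)
  qed
  then have "finite (Poly_Mapping.lookup ` Smon \<Delta> F q)" using fin finite_subset by blast
  moreover have "inj_on Poly_Mapping.lookup (Smon \<Delta> F q)" by (rule inj_onI) (simp add: poly_mapping_eqI)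
  ultimately show ?thesis using finite_imageD by blast
qed

lemma spn_in_I: "in_I T n d \<Delta> y \<Longrightarrow> spn T n d \<Delta> S y"
  unfolding spn_def by (rule exI[of _ "\<lambda>_. 0"]) simp

lemma spn_add: "spn T n d \<Delta> S y1 \<Longrightarrow> spn T n d \<Delta> S y2 \<Longrightarrow> spn T n d \<Delta> S (y1 + y2)"
  unfolding spn_def
proof (elim exE)
  fix c1 c2 assume 1: "in_I T n d \<Delta> (y1 - (\<Sum>s\<in>S. const_pol (c1 s) * monom s))"
    and 2: "in_I T n d \<Delta> (y2 - (\<Sum>s\<in>S. const_pol (c2 s) * monom s))"
  have eq: "y1 + y2 - (\<Sum>s\<in>S. const_pol (c1 s + c2 s) * monom s) =
    (y1 - (\<Sum>s\<in>S. const_pol (c1 s) * monom s)) + (y2 - (\<Sum>s\<in>S. const_pol (c2 s) * monom s))"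
    by (simp add: const_pol_add distrib_right sum.distrib)
  show "\<exists>c. in_I T n d \<Delta> (y1 + y2 - (\<Sum>s\<in>S. const_pol (c s) * monom s))"
    by (intro exI[of _ "\<lambda>s. c1 s + c2 s"], subst eq, rule in_I_add[OF 1 2])
qed

lemma spn_const: "dclosed \<Delta> \<Longrightarrow> spn T n d \<Delta> S y \<Longrightarrow> spn T n d \<Delta> S (const_pol a * y)"
  unfolding spn_def
proof (elim exE)
  fix c assume D: "dclosed \<Delta>" and 1: "in_I T n d \<Delta> (y - (\<Sum>s\<in>S. const_pol (c s) * monom s))"
  have eq: "const_pol a * y - (\<Sum>s\<in>S. const_pol (a * c s) * monom s) =
    (y - (\<Sum>s\<in>S. const_pol (c s) * monom s)) * const_pol a"
    by (simp add: const_pol_mult right_diff_distrib left_diff_distrib sum_distrib_right sum_distrib_left mult_ac)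
  show "\<exists>c. in_I T n d \<Delta> (const_pol a * y - (\<Sum>s\<in>S. const_pol (c s) * monom s))"
    by (intro exI[of _ "\<lambda>s. a * c s"], subst eq, rule in_I_mult[OF D 1])
qed

lemma spn_0: "spn T n d \<Delta> S 0"
  by (rule spn_in_I) (rule in_I_0)

lemma spn_sum: "(\<And>i. i \<in> A \<Longrightarrow> spn T n d \<Delta> S (f i)) \<Longrightarrow> spn T n d \<Delta> S (\<Sum>i\<in>A. f i)"
  by (induction A rule: infinite_finite_induct) (simp_all add: spn_add spn_0)

lemma spn_diff_in_I: "spn T n d \<Delta> S y \<Longrightarrow> in_I T n d \<Delta> (y' - y) \<Longrightarrow> spn T n d \<Delta> S y'"
  using spn_add[of T n d \<Delta> S "y' - y" y] spn_in_I by fastforce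




definition fdeg :: "nat set \<Rightarrow> (nat \<Rightarrow>\<^sub>0 nat) \<Rightarrow> nat" where
  "fdeg F m = (\<Sum>j\<in>F. Poly_Mapping.lookup m j)"

lemma fdeg_add: "fdeg F (a + b) = fdeg F a + fdeg F b"
  by (simp add: fdeg_def lookup_add sum.distrib)

lemma fdeg_single: "finite F \<Longrightarrow> fdeg F (Poly_Mapping.single l 1) = (if l \<in> F then 1 else 0)"
  by (simp add: fdeg_def lookup_single when_def sum.delta)

lemma monom_add: "monom (a + b) = (monom a * monom b :: 'K::comm_ring_1 pol)"
  by (simp add: monom_def mult_single)

lemma var_monom: "var j = monom (Poly_Mapping.single j 1)"
  by (simp add: var_def monom_def)

lemma spn_monom:
  assumes D: "dclosed \<Delta>" and V: "\<forall>G\<in>\<Delta>. G \<subseteq> {1..n}" and F: "finite F" "F \<subseteq> {1..n}" "card F \<le> d"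
  shows "mdeg m = q \<Longrightarrow> spn TYPE('k::field) n d \<Delta> (Smon \<Delta> F q) (monom m)"
proof -
  let ?S = "Smon \<Delta> F q"
  have nonface: "spn TYPE('k) n d \<Delta> ?S (monom m)" if "supp m \<notin> \<Delta>" for m
    unfolding monom_def by (rule spn_in_I, rule in_I_nonface[OF that])
  have "\<forall>m. mdeg m = q \<longrightarrow> fdeg F m = k \<longrightarrow> spn TYPE('k) n d \<Delta> ?S (monom m)" for k
  proof (induction k)
    case 0
    show ?case
    proof (intro allI impI)
      fix m assume m: "mdeg m = q" "fdeg F m = 0"
      show "spn TYPE('k) n d \<Delta> ?S (monom m)"
      proof (cases "supp m \<in> \<Delta>")
        case False then show ?thesis by (rule nonface)
      next
        case True
        have "\<forall>j\<in>F. Poly_Mapping.lookup m j = 0" using m(2) F(1) unfolding fdeg_def by simp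
        then have "supp m \<inter> F = {}" unfolding supp_def by (auto simp: in_keys_iff)
        then have mS: "m \<in> ?S" using True m(1) unfolding Smon_def by blast
        have "(\<Sum>s\<in>?S. const_pol (if s = m then 1 else 0) * monom s) = (monom m :: 'k KK pol)"
        proof -
          have "(\<Sum>s\<in>?S. const_pol (if s = m then 1 else 0) * monom s) = (\<Sum>s\<in>?S. if s = m then monom m else (0 :: 'k KK pol))"
            by (intro sum.cong refl) simp
          also have "\<dots> = monom m" using mS finite_Smon[OF V] by (simp add: sum.delta')
          finally show ?thesis .
        qed
        then have "monom m - (\<Sum>s\<in>?S. const_pol (if s = m then 1 else 0) * monom s) = (0 :: 'k KK pol)" by simp
        then show ?thesis unfolding spn_def using in_I_0 by (intro exI[of _ "\<lambda>s. if s = m then 1 else 0"]) simp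
      qed
    qed
  next
    case (Suc k)
    show ?case
    proof (intro allI impI)
      fix m assume m: "mdeg m = q" "fdeg F m = Suc k"
      show "spn TYPE('k) n d \<Delta> ?S (monom m)"
      proof (cases "supp m \<in> \<Delta>")
        case False then show ?thesis by (rule nonface)
      next
        case True
        obtain j where j: "j \<in> F" "Poly_Mapping.lookup m j > 0"
        proof -
          have "(\<Sum>j\<in>F. Poly_Mapping.lookup m j) \<noteq> 0" using m(2) unfolding fdeg_def by simp
          then obtain j where "j \<in> F" "Poly_Mapping.lookup m j \<noteq> 0" by (meson sum.neutral)
          then show ?thesis using that by blast
        qed
        define m' where "m' = m - Poly_Mapping.single j 1"
        have mm': "m = Poly_Mapping.single j 1 + m'"
          unfolding m'_def using j(2)
          by (intro poly_mapping_eqI) (auto simp: lookup_add lookup_minus lookup_single when_def)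
        have fd': "fdeg F m' = k" using m(2) mm' fdeg_add[of F "Poly_Mapping.single j 1" m'] fdeg_single[OF F(1), of j] j(1) by simp
        have md': "mdeg m' + 1 = q" using m(1) mm' mdeg_add[of "Poly_Mapping.single j 1" m'] mdeg_single[of j] by simp
        obtain b where b: "in_I TYPE('k) n d \<Delta> (var j - (\<Sum>l\<in>{1..n} - F. const_pol (b l) * var l))"
          using elim_var[OF F j(1)] by blast
        let ?L = "{1..n} - F"
        have eq: "monom m - (\<Sum>l\<in>?L. const_pol (b l) * monom (Poly_Mapping.single l 1 + m')) =
          (var j - (\<Sum>l\<in>?L. const_pol (b l) * var l)) * (monom m' :: 'k KK pol)"
          unfolding mm' monom_add var_monom by (simp add: left_diff_distrib right_diff_distrib sum_distrib_right sum_distrib_left mult_ac)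
        have "in_I TYPE('k) n d \<Delta> (monom m - (\<Sum>l\<in>?L. const_pol (b l) * monom (Poly_Mapping.single l 1 + m')))"
          unfolding eq by (rule in_I_mult[OF D b])
        moreover have "spn TYPE('k) n d \<Delta> ?S (\<Sum>l\<in>?L. const_pol (b l) * monom (Poly_Mapping.single l 1 + m'))"
        proof (rule spn_sum, rule spn_const[OF D])
          fix l assume l: "l \<in> ?L"
          have "mdeg (Poly_Mapping.single l 1 + m') = q" using md' mdeg_add[of "Poly_Mapping.single l 1" m'] mdeg_single[of l] by simp
          moreover have "fdeg F (Poly_Mapping.single l 1 + m') = k" using l fd' fdeg_add[of F "Poly_Mapping.single l 1" m'] fdeg_single[OF F(1), of l] by simp
          ultimately show "spn TYPE('k) n d \<Delta> ?S (monom (Poly_Mapping.single l 1 + m'))" using Suc.IH by blast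
        qed
        ultimately show ?thesis by (rule spn_diff_in_I[rotated])
      qed
    qed
  qed
  then show "mdeg m = q \<Longrightarrow> spn TYPE('k) n d \<Delta> ?S (monom m)" by blast
qed

lemma spn_homog:
  assumes D: "dclosed \<Delta>" and V: "\<forall>G\<in>\<Delta>. G \<subseteq> {1..n}" and F: "finite F" "F \<subseteq> {1..n}" "card F \<le> d" and p: "homog q p"
  shows "spn TYPE('k::field) n d \<Delta> (Smon \<Delta> F q) p"
proof -
  have "p = (\<Sum>m\<in>Poly_Mapping.keys p. const_pol (Poly_Mapping.lookup p m) * monom m)"
    by (subst decomp[of p]) (simp add: const_pol_def monom_def mult_single)
  also have "spn TYPE('k) n d \<Delta> (Smon \<Delta> F q) \<dots>"
    using p unfolding homog_def by (intro spn_sum spn_const[OF D] spn_monom[OF D V F]) auto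
  finally show ?thesis .
qed




lemma basis_extract:
  fixes W :: "'K::field pol \<Rightarrow> bool" and v :: "'a \<Rightarrow> 'K pol"
  assumes W0: "W 0" and Wadd: "\<And>a b. W a \<Longrightarrow> W b \<Longrightarrow> W (a + b)"
    and Wc: "\<And>c a. W a \<Longrightarrow> W (const_pol c * a)"
    and fin: "finite S"
    and span: "\<And>p. P p \<Longrightarrow> \<exists>c. W (p - (\<Sum>s\<in>S. const_pol (c s) * v s))"
  shows "\<exists>B\<subseteq>S. (\<forall>c. W (\<Sum>m\<in>B. const_pol (c m) * v m) \<longrightarrow> (\<forall>m\<in>B. c m = 0)) \<and>
     (\<forall>p. P p \<longrightarrow> (\<exists>c. W (p - (\<Sum>m\<in>B. const_pol (c m) * v m))))"
proof -
  define Ind where "Ind B \<longleftrightarrow> (\<forall>c. W (\<Sum>m\<in>B. const_pol (c m) * v m) \<longrightarrow> (\<forall>m\<in>B. c m = 0))" for B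
  have Wneg: "W (- a)" if "W a" for a
    using Wc[OF that, of "-1"] by (simp add: const_pol_uminus)
  have Wdiff: "W (a - b)" if "W a" "W b" for a b
    using Wadd[OF that(1) Wneg[OF that(2)]] by simp
  have Wsum: "W (\<Sum>i\<in>I. f i)" if "\<And>i. i \<in> I \<Longrightarrow> W (f i)" for I and f :: "'b \<Rightarrow> 'K pol"
    using that by (induction I rule: infinite_finite_induct) (simp_all add: W0 Wadd)
  have "\<exists>B. B \<subseteq> S \<and> Ind B \<and> (\<forall>B'. B' \<subseteq> S \<and> Ind B' \<longrightarrow> card B' \<le> card B)"
  proof -
    have "finite {B. B \<subseteq> S \<and> Ind B}" using fin by simp
    moreover have "{} \<in> {B. B \<subseteq> S \<and> Ind B}" by (simp add: Ind_def)
    ultimately have "Max (card ` {B. B \<subseteq> S \<and> Ind B}) \<in> card ` {B. B \<subseteq> S \<and> Ind B}"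
      by (intro Max_in) auto
    then obtain B where "B \<in> {B. B \<subseteq> S \<and> Ind B}" "card B = Max (card ` {B. B \<subseteq> S \<and> Ind B})"
      by auto
    moreover have "card B' \<le> Max (card ` {B. B \<subseteq> S \<and> Ind B})" if "B' \<in> {B. B \<subseteq> S \<and> Ind B}" for B'
      using \<open>finite {B. B \<subseteq> S \<and> Ind B}\<close> that by (intro Max_ge) auto
    ultimately have "B \<subseteq> S \<and> Ind B \<and> (\<forall>B'. B' \<subseteq> S \<and> Ind B' \<longrightarrow> card B' \<le> card B)" by auto
    then show ?thesis by blast
  qed
  then obtain B where B: "B \<subseteq> S" "Ind B" and maxB: "\<And>B'. B' \<subseteq> S \<Longrightarrow> Ind B' \<Longrightarrow> card B' \<le> card B"
    by blast
  have finB: "finite B" using B(1) fin finite_subset by blast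
  have red: "\<exists>e. W (v s - (\<Sum>m\<in>B. const_pol (e m) * v m))" if s: "s \<in> S - B" for s
  proof -
    have "\<not> Ind (insert s B)"
    proof
      assume "Ind (insert s B)"
      then have "card (insert s B) \<le> card B" using maxB B(1) s by blast
      then show False using s finB by simp
    qed
    then obtain c where c: "W (\<Sum>m\<in>insert s B. const_pol (c m) * v m)" "\<exists>m\<in>insert s B. c m \<noteq> 0"
      unfolding Ind_def by blast
    have sumi: "(\<Sum>m\<in>insert s B. const_pol (c m) * v m) = const_pol (c s) * v s + (\<Sum>m\<in>B. const_pol (c m) * v m)"
      using s finB by simp
    have cs: "c s \<noteq> 0"
    proof
      assume "c s = 0"
      then have "W (\<Sum>m\<in>B. const_pol (c m) * v m)" using c(1) sumi by simp
      then have "\<forall>m\<in>B. c m = 0" using B(2) unfolding Ind_def by blast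
      then show False using c(2) \<open>c s = 0\<close> by blast
    qed
    have "W (const_pol (1 / c s) * (\<Sum>m\<in>insert s B. const_pol (c m) * v m))" by (rule Wc[OF c(1)])
    moreover have "const_pol (1 / c s) * (\<Sum>m\<in>insert s B. const_pol (c m) * v m) =
       v s - (\<Sum>m\<in>B. const_pol (- c m / c s) * v m)"
      unfolding sumi using cs
      by (simp add: distrib_left sum_distrib_left mult.assoc[symmetric] const_pol_mult[symmetric]
          const_pol_uminus sum_negf)
    ultimately show ?thesis by auto
  qed
  then obtain e where e: "\<And>s. s \<in> S - B \<Longrightarrow> W (v s - (\<Sum>m\<in>B. const_pol (e s m) * v m))"
    by metis
  have spanB: "\<exists>c. W (p - (\<Sum>m\<in>B. const_pol (c m) * v m))" if Pp: "P p" for p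
  proof -
    obtain d where d: "W (p - (\<Sum>s\<in>S. const_pol (d s) * v s))" using span[OF Pp] by blast
    define c where "c m = d m + (\<Sum>s\<in>S - B. d s * e s m)" for m
    have split: "(\<Sum>s\<in>S. const_pol (d s) * v s) = (\<Sum>s\<in>S - B. const_pol (d s) * v s) + (\<Sum>s\<in>B. const_pol (d s) * v s)"
      using sum.subset_diff[OF B(1) fin] by simp
    have cs: "(\<Sum>m\<in>B. const_pol (c m) * v m) = (\<Sum>m\<in>B. const_pol (d m) * v m) +
        (\<Sum>s\<in>S - B. const_pol (d s) * (\<Sum>m\<in>B. const_pol (e s m) * v m))"
      unfolding c_def const_pol_add const_pol_sum const_pol_mult
      by (simp add: distrib_right sum.distrib sum_distrib_left sum_distrib_right mult.assoc sum.swap[of _ B "S - B"])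
    have eq: "p - (\<Sum>m\<in>B. const_pol (c m) * v m) = (p - (\<Sum>s\<in>S. const_pol (d s) * v s)) +
       (\<Sum>s\<in>S - B. const_pol (d s) * (v s - (\<Sum>m\<in>B. const_pol (e s m) * v m)))"
      unfolding cs split by (simp add: right_diff_distrib sum_subtractf algebra_simps)
    have "W ((p - (\<Sum>s\<in>S. const_pol (d s) * v s)) +
       (\<Sum>s\<in>S - B. const_pol (d s) * (v s - (\<Sum>m\<in>B. const_pol (e s m) * v m))))" by (intro Wadd d Wsum Wc e)
    then have "W (p - (\<Sum>m\<in>B. const_pol (c m) * v m))" by (simp only: eq)
    then show ?thesis by blast
  qed
  show ?thesis using B(1,2) spanB unfolding Ind_def by blast
qed




theorem lemma4p8:
  fixes \<Delta> :: "nat set set" and n d q :: nat and eps :: "nat set \<Rightarrow> int"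
    and deg :: "('k::field KK) pol \<Rightarrow> 'k KK" and F :: "nat set"
  assumes "d \<ge> 2"
    and "homology_manifold TYPE('k) d n \<Delta>"
    and "oriented TYPE('k) d \<Delta> eps"
    and "\<forall>p p'. homog d p \<longrightarrow> homog d p' \<longrightarrow> deg (p + p') = deg p + deg p'"
    and "\<forall>c p. homog d p \<longrightarrow> deg (const_pol c * p) = c * deg p"
    and "\<forall>p. homog d p \<longrightarrow> (deg p = 0 \<longleftrightarrow> in_I TYPE('k) n d \<Delta> p)"
    and "\<forall>G. facet \<Delta> G \<longrightarrow> deg (xG G) = of_int (eps G) / bracket d G"
    and "facet \<Delta> F"
  shows "\<exists>B. finite B \<and> (\<forall>m\<in>B. supp m \<in> \<Delta> \<and> supp m \<inter> F = {} \<and> mdeg m = q) \<and>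
    (\<forall>c. gor d deg (\<Sum>m\<in>B. const_pol (c m) * monom m) \<longrightarrow> (\<forall>m\<in>B. c m = 0)) \<and>
    (\<forall>p. homog q p \<longrightarrow> (\<exists>c. gor d deg (p - (\<Sum>m\<in>B. const_pol (c m) * monom m))))"
proof -
  note d2 = assms(1) and hm = assms(2) and dadd = assms(4) and dmul = assms(5) and dker = assms(6)
  have sc: "simplicial_complex n \<Delta>" and cardle: "\<forall>G\<in>\<Delta>. card G \<le> d"
    using hm unfolding homology_manifold_def by auto
  have D: "dclosed \<Delta>" using sc unfolding simplicial_complex_def dclosed_def by blast
  have V: "\<forall>G\<in>\<Delta>. G \<subseteq> {1..n}" using sc unfolding simplicial_complex_def by blast
  have FD: "F \<in> \<Delta>" using assms(8) unfolding facet_def by blast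
  have Fsub: "F \<subseteq> {1..n}" using V FD by blast
  have Ffin: "finite F" using Fsub finite_subset by blast
  have Fcard: "card F \<le> d" using cardle FD by blast
  have h0: "homog d (0 :: 'k KK pol)" by (simp add: homog_def)
  have deg0: "deg 0 = 0" using dker h0 in_I_0 by blast
  have W0: "gor d deg 0" unfolding gor_def using deg0 by simp
  have Wadd: "gor d deg (a + b)" if "gor d deg a" "gor d deg b" for a b
    unfolding gor_def
  proof
    fix z
    have "deg (hcomp d ((a + b) * z)) = deg (hcomp d (a * z) + hcomp d (b * z))"
      by (simp add: distrib_right hcomp_add)
    also have "\<dots> = deg (hcomp d (a * z)) + deg (hcomp d (b * z))"
      using dadd homog_hcomp by blast
    also have "\<dots> = 0" using that unfolding gor_def by simp
    finally show "deg (hcomp d ((a + b) * z)) = 0" .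
  qed
  have Wc: "gor d deg (const_pol c * a)" if "gor d deg a" for c a
    unfolding gor_def
  proof
    fix z
    have "deg (hcomp d (const_pol c * a * z)) = deg (const_pol c * hcomp d (a * z))"
      by (simp add: mult.assoc hcomp_const)
    also have "\<dots> = c * deg (hcomp d (a * z))" using dmul homog_hcomp by blast
    also have "\<dots> = 0" using that unfolding gor_def by simp
    finally show "deg (hcomp d (const_pol c * a * z)) = 0" .
  qed
  have IW: "gor d deg y" if "in_I TYPE('k) n d \<Delta> y" for y
    unfolding gor_def
  proof
    fix z
    have "in_I TYPE('k) n d \<Delta> (hcomp d (y * z))"
      using in_I_hcomp[OF _ in_I_mult[OF D that, of z]] d2 by simp
    then show "deg (hcomp d (y * z)) = 0" using dker homog_hcomp by blast
  qed
  have span: "\<exists>c. gor d deg (p - (\<Sum>s\<in>Smon \<Delta> F q. const_pol (c s) * monom s))" if "homog q p" for p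
    using spn_homog[OF D V Ffin Fsub Fcard that] IW unfolding spn_def by blast
  obtain B where B: "B \<subseteq> Smon \<Delta> F q"
    "\<forall>c. gor d deg (\<Sum>m\<in>B. const_pol (c m) * monom m) \<longrightarrow> (\<forall>m\<in>B. c m = 0)"
    "\<forall>p. homog q p \<longrightarrow> (\<exists>c. gor d deg (p - (\<Sum>m\<in>B. const_pol (c m) * monom m)))"
    using basis_extract[of "gor d deg" "Smon \<Delta> F q" "homog q" monom, OF W0 Wadd Wc finite_Smon[OF V] span]
    by blast
  have "finite B" using B(1) finite_Smon[OF V] finite_subset by blast
  moreover have "\<forall>m\<in>B. supp m \<in> \<Delta> \<and> supp m \<inter> F = {} \<and> mdeg m = q" using B(1) unfolding Smon_def by blast
  ultimately show ?thesis using B(2,3) by blast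
qed


end
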